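(* Let $(G,M,\Delta)$ be a Garside structure and $(H,N,\delta)$ a parabolic substructure. Put $\omega=\delta^{-1}\Delta$ and $\Phi(\alpha)=\Delta\alpha\Delta^{-1}$. Let $k\ge0$ be an integer and let $a\in M$ be of the form $a=\omega_1\omega_2\cdots\omega_k c$, where $\omega_i=\Phi^{-i+1}(\omega)$ for $i\in\{1,\dots,k\}$, $c\in M$, $\Phi^{-k}(\omega)\not\le_L c$, and $c$ is $\Phi^{-k}(N)$-reduced. Then $\lg(a)=\lg(c)+k$.
   Context: Let $G$ be a group and $M$ a submonoid with $M\cap M^{-1}=\{1\}$. Define $\alpha\le_L\beta$ iff $\alpha^{-1}\beta\in M$, and $\alpha\le_R\beta$ iff $\beta\alpha^{-1}\in M$. For $a\in M$ let $\mathrm{Div}_L(a)=\{b\in M: b\le_L a\}$, $\mathrm{Div}_R(a)=\{b\in M: b\le_R a\}$; $a$ is balanced if these coincide, and then $\mathrm{Div}(a)$ denotes this set. $M$ is Noetherian if each $a\in M$ admits an $n$ such that $a$ is not a product of more than $n$ non-trivial factors. A Garside structure $(G,M,\Delta)$: $\Delta\in M$ balanced, $M$ Noetherian, $\mathrm{Div}(\Delta)$ finite and generating $M$ as a monoid and $G$ as a group, $(G,\le_L)$ a lattice with meet $\wedge_L$. A parabolic substructure $(H,N,\delta)$: $\delta\in M$ balanced, $H$ (resp. $N$) the subgroup (resp. submonoid) generated by $\mathrm{Div}(\delta)$, and $\mathrm{Div}(\delta)=\mathrm{Div}(\Delta)\cap N$; it is assumed $H\ne\{1\}$. $\lg$ is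 word length on $G$ with respect to $\mathcal S=\mathrm{Div}(\Delta)\setminus\{1\}$. For $j\in\mathbb Z$, an element $c\in M$ is $\Phi^{j}(N)$-reduced if the only $b\in\Phi^{j}(N)$ with $b\le_L c$ is $b=1$ (equivalently $c\wedge_L\Phi^{j}(\delta)=1$). *)

theory Defs
  imports "HOL-Algebra.Algebra"
begin

definition lprod :: "('a,'b) monoid_scheme \<Rightarrow> 'a list \<Rightarrow> 'a" where
  "lprod G xs = foldr (\<lambda>x y. x \<otimes>\<^bsub>G\<^esub> y) xs \<one>\<^bsub>G\<^esub>"

definition monoid_gen :: "('a,'b) monoid_scheme \<Rightarrow> 'a set \<Rightarrow> 'a set" where
  "monoid_gen G S = {lprod G xs | xs. set xs \<subseteq> S}"

definition leL :: "('a,'b) monoid_scheme \<Rightarrow> 'a set \<Rightarrow> 'a \<Rightarrow> 'a \<Rightarrow> bool" where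
  "leL G M \<alpha> \<beta> \<longleftrightarrow> inv\<^bsub>G\<^esub> \<alpha> \<otimes>\<^bsub>G\<^esub> \<beta> \<in> M"

definition leR :: "('a,'b) monoid_scheme \<Rightarrow> 'a set \<Rightarrow> 'a \<Rightarrow> 'a \<Rightarrow> bool" where
  "leR G M \<alpha> \<beta> \<longleftrightarrow> \<beta> \<otimes>\<^bsub>G\<^esub> inv\<^bsub>G\<^esub> \<alpha> \<in> M"

definition DivL :: "('a,'b) monoid_scheme \<Rightarrow> 'a set \<Rightarrow> 'a \<Rightarrow> 'a set" where
  "DivL G M a = {b \<in> M. leL G M b a}"

definition DivR :: "('a,'b) monoid_scheme \<Rightarrow> 'a set \<Rightarrow> 'a \<Rightarrow> 'a set" where
  "DivR G M a = {b \<in> M. leR G M b a}"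

definition balanced :: "('a,'b) monoid_scheme \<Rightarrow> 'a set \<Rightarrow> 'a \<Rightarrow> bool" where
  "balanced G M a \<longleftrightarrow> a \<in> M \<and> DivL G M a = DivR G M a"

text \<open>Div(a) for balanced a (= DivL = DivR)\<close>
definition Div :: "('a,'b) monoid_scheme \<Rightarrow> 'a set \<Rightarrow> 'a \<Rightarrow> 'a set" where
  "Div G M a = DivL G M a"

definition pointed_submonoid :: "('a,'b) monoid_scheme \<Rightarrow> 'a set \<Rightarrow> bool" where
  "pointed_submonoid G M \<longleftrightarrow> group G \<and> M \<subseteq> carrier G \<and> \<one>\<^bsub>G\<^esub> \<in> M
     \<and> (\<forall>x\<in>M. \<forall>y\<in>M. x \<otimes>\<^bsub>G\<^esub> y \<in> M)
     \<and> M \<inter> (\<lambda>x. inv\<^bsub>G\<^esub> x) ` M = {\<one>\<^bsub>G\<^esub>}"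

definition noetherian :: "('a,'b) monoid_scheme \<Rightarrow> 'a set \<Rightarrow> bool" where
  "noetherian G M \<longleftrightarrow> (\<forall>a\<in>M. \<exists>n::nat. \<forall>xs. set xs \<subseteq> M - {\<one>\<^bsub>G\<^esub>} \<and> lprod G xs = a
       \<longrightarrow> length xs \<le> n)"

definition leL_lattice :: "('a,'b) monoid_scheme \<Rightarrow> 'a set \<Rightarrow> bool" where
  "leL_lattice G M \<longleftrightarrow> (\<forall>x\<in>carrier G. \<forall>y\<in>carrier G.
      (\<exists>m\<in>carrier G. leL G M m x \<and> leL G M m y \<and>
          (\<forall>z\<in>carrier G. leL G M z x \<and> leL G M z y \<longrightarrow> leL G M z m)) \<and>
      (\<exists>j\<in>carrier G. leL G M x j \<and> leL G M y j \<and>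
          (\<forall>z\<in>carrier G. leL G M x z \<and> leL G M y z \<longrightarrow> leL G M j z)))"

definition garside :: "('a,'b) monoid_scheme \<Rightarrow> 'a set \<Rightarrow> 'a \<Rightarrow> bool" where
  "garside G M \<Delta> \<longleftrightarrow> pointed_submonoid G M \<and> balanced G M \<Delta> \<and> noetherian G M
     \<and> finite (Div G M \<Delta>) \<and> monoid_gen G (Div G M \<Delta>) = M
     \<and> generate G (Div G M \<Delta>) = carrier G \<and> leL_lattice G M"

text \<open>parabolic substructure (H,N,\<delta>) with H \<noteq> {1}; H, N are determined by \<delta>\<close>
definition parabolic :: "('a,'b) monoid_scheme \<Rightarrow> 'a set \<Rightarrow> 'a \<Rightarrow> 'a \<Rightarrow> bool" where
  "parabolic G M \<Delta> \<delta> \<longleftrightarrow> balanced G M \<delta>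
     \<and> Div G M \<delta> = Div G M \<Delta> \<inter> monoid_gen G (Div G M \<delta>)
     \<and> generate G (Div G M \<delta>) \<noteq> {\<one>\<^bsub>G\<^esub>}"

definition parN :: "('a,'b) monoid_scheme \<Rightarrow> 'a set \<Rightarrow> 'a \<Rightarrow> 'a set" where
  "parN G M \<delta> = monoid_gen G (Div G M \<delta>)"

definition Phi :: "('a,'b) monoid_scheme \<Rightarrow> 'a \<Rightarrow> int \<Rightarrow> 'a \<Rightarrow> 'a" where
  "Phi G \<Delta> j \<alpha> = \<Delta> [^]\<^bsub>G\<^esub> j \<otimes>\<^bsub>G\<^esub> \<alpha> \<otimes>\<^bsub>G\<^esub> \<Delta> [^]\<^bsub>G\<^esub> (-j)"

definition reduced :: "('a,'b) monoid_scheme \<Rightarrow> 'a set \<Rightarrow> 'a \<Rightarrow> 'a \<Rightarrow> int \<Rightarrow> 'a \<Rightarrow> bool" where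
  "reduced G M \<Delta> \<delta> j c \<longleftrightarrow>
     (\<forall>b\<in>Phi G \<Delta> j ` parN G M \<delta>. leL G M b c \<longrightarrow> b = \<one>\<^bsub>G\<^esub>)"

definition wlen :: "('a,'b) monoid_scheme \<Rightarrow> 'a set \<Rightarrow> 'a \<Rightarrow> 'a \<Rightarrow> nat" where
  "wlen G M \<Delta> g = (LEAST n. \<exists>xs. length xs = n \<and>
      set xs \<subseteq> (Div G M \<Delta> - {\<one>\<^bsub>G\<^esub>}) \<union> (\<lambda>x. inv\<^bsub>G\<^esub> x) ` (Div G M \<Delta> - {\<one>\<^bsub>G\<^esub>})
      \<and> lprod G xs = g)"

end

theory Submission
  imports Defs
begin

locale GS = group G for G (structure) +
  fixes M :: "'a set" and D d :: 'a
  assumes gar: "garside G M D" and par: "parabolic G M D d"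
begin

abbreviation le (infix "\<preceq>" 50) where "x \<preceq> y \<equiv> leL G M x y"
abbreviation P where "P (j::int) \<equiv> D [^] j"
abbreviation Ph where "Ph j x \<equiv> Phi G D j x"

lemma M_carr: "M \<subseteq> carrier G" using gar by (simp add: garside_def pointed_submonoid_def)
lemma M_one: "\<one> \<in> M" using gar by (simp add: garside_def pointed_submonoid_def)
lemma M_mult: "x \<in> M \<Longrightarrow> y \<in> M \<Longrightarrow> x \<otimes> y \<in> M"
  using gar by (simp add: garside_def pointed_submonoid_def)
lemma M_inv: assumes "x \<in> M" "inv x \<in> M" shows "x = \<one>"
proof -
  have e: "M \<inter> (\<lambda>x. inv x) ` M = {\<one>}" using gar by (simp add: garside_def pointed_submonoid_def)
  have "inv x \<in> M \<inter> (\<lambda>x. inv x) ` M" using assms(2) imageI[OF assms(1)] by (rule IntI)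
  then have "inv x \<in> {\<one>}" by (simp only: e)
  then have i1: "inv x = \<one>" by simp
  have xc: "x \<in> carrier G" using assms(1) M_carr by (rule subsetD[rotated])
  have "x = inv (inv x)" using xc by simp
  also have "\<dots> = \<one>" using i1 by simp
  finally show ?thesis .
qed
lemma M_c: "x \<in> M \<Longrightarrow> x \<in> carrier G" using M_carr by auto

lemma cx1[simp]: "x \<in> carrier G \<Longrightarrow> z \<in> carrier G \<Longrightarrow> x \<otimes> (inv x \<otimes> z) = z"
  by (simp add: m_assoc[symmetric])
lemma cx2[simp]: "x \<in> carrier G \<Longrightarrow> z \<in> carrier G \<Longrightarrow> inv x \<otimes> (x \<otimes> z) = z"
  by (simp add: m_assoc[symmetric])
lemma D_bal: "balanced G M D" using gar by (simp add: garside_def)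
lemma D_M: "D \<in> M" using D_bal by (simp add: balanced_def)
lemma D_c[simp]: "D \<in> carrier G" using D_M M_c by auto
lemma DivLR: "DivL G M D = DivR G M D" using D_bal by (simp add: balanced_def)
lemma gen: "monoid_gen G (Div G M D) = M" using gar by (simp add: garside_def)
lemma lat: "leL_lattice G M" using gar by (simp add: garside_def)

lemma le_def': "x \<preceq> y \<longleftrightarrow> inv x \<otimes> y \<in> M" by (simp add: leL_def)

lemma le_refl: "x \<in> carrier G \<Longrightarrow> x \<preceq> x" by (simp add: leL_def M_one)
lemma le_trans: assumes "x \<in> carrier G" "y \<in> carrier G" "z \<in> carrier G" "x \<preceq> y" "y \<preceq> z"
  shows "x \<preceq> z"
proof -
  have "inv x \<otimes> z = (inv x \<otimes> y) \<otimes> (inv y \<otimes> z)" using assms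
    by (simp add: m_assoc)
  then show ?thesis using assms M_mult by (simp add: leL_def)
qed
lemma le_antisym: assumes "x \<in> carrier G" "y \<in> carrier G" "x \<preceq> y" "y \<preceq> x" shows "x = y"
proof -
  have i: "inv x \<otimes> y \<in> M" using assms(3) by (simp add: leL_def)
  have "inv (inv x \<otimes> y) = inv y \<otimes> x" using assms by (simp add: inv_mult_group)
  then have "inv (inv x \<otimes> y) \<in> M" using assms(4) by (simp add: leL_def)
  then have "inv x \<otimes> y = \<one>" by (rule M_inv[OF i])
  moreover have "y = x \<otimes> (inv x \<otimes> y)" using assms by simp
  ultimately show ?thesis using assms by simp
qed
lemma le_lmult: assumes "x \<in> carrier G" "y \<in> carrier G" "z \<in> carrier G"
  shows "z \<otimes> x \<preceq> z \<otimes> y \<longleftrightarrow> x \<preceq> y"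
proof -
  have "inv (z \<otimes> x) \<otimes> (z \<otimes> y) = inv x \<otimes> y" using assms
    by (simp add: inv_mult_group m_assoc)
  then show ?thesis by (simp add: leL_def)
qed
lemma one_le: "x \<in> carrier G \<Longrightarrow> \<one> \<preceq> x \<longleftrightarrow> x \<in> M" by (simp add: leL_def)
lemma le_one: "x \<in> carrier G \<Longrightarrow> x \<preceq> \<one> \<longleftrightarrow> inv x \<in> M" by (simp add: leL_def)
lemma le_one_M: assumes "x \<in> M" "x \<preceq> \<one>" shows "x = \<one>"
proof -
  have "inv x \<in> M" using assms(2) le_one[OF M_c[OF assms(1)]] by simp
  then show ?thesis by (rule M_inv[OF assms(1)])
qed

lemma meet_ex: assumes "x \<in> carrier G" "y \<in> carrier G"
  obtains m where "m \<in> carrier G" "m \<preceq> x" "m \<preceq> y" "\<And>z. z \<in> carrier G \<Longrightarrow> z \<preceq> x \<Longrightarrow> z \<preceq> y \<Longrightarrow> z \<preceq> m"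
proof -
  have "\<exists>m\<in>carrier G. m \<preceq> x \<and> m \<preceq> y \<and> (\<forall>z\<in>carrier G. z \<preceq> x \<and> z \<preceq> y \<longrightarrow> z \<preceq> m)"
    using conjunct1[OF bspec[OF bspec[OF lat[unfolded leL_lattice_def] assms(1)] assms(2)]] .
  then obtain m where m: "m \<in> carrier G" "m \<preceq> x" "m \<preceq> y" "\<forall>z\<in>carrier G. z \<preceq> x \<and> z \<preceq> y \<longrightarrow> z \<preceq> m"
    by (elim bexE conjE)
  show ?thesis by (rule that[OF m(1,2,3)]) (use m(4) in simp)
qed

lemma coprime_pos: assumes "x \<in> M" "y \<in> M" "\<And>w. w \<in> M \<Longrightarrow> w \<preceq> x \<Longrightarrow> w \<preceq> y \<Longrightarrow> w = \<one>"
  and "w \<in> carrier G" "w \<preceq> x" "w \<preceq> y" shows "w \<preceq> \<one>"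
proof -
  obtain m where m: "m \<in> carrier G" "m \<preceq> x" "m \<preceq> y" "\<And>z. z \<in> carrier G \<Longrightarrow> z \<preceq> x \<Longrightarrow> z \<preceq> y \<Longrightarrow> z \<preceq> m"
    by (rule meet_ex[OF M_c[OF assms(1)] M_c[OF assms(2)]]) blast
  have "\<one> \<preceq> m" using m(4)[of \<one>] assms one_le M_c by simp
  then have "m \<in> M" using m one_le by simp
  then have "m = \<one>" using assms(3) m(2,3) by simp
  then show ?thesis using m(4)[OF assms(4,5,6)] by simp
qed


lemma P_c[simp]: "P j \<in> carrier G" by simp
lemma P_add: "P (i + j) = P i \<otimes> P j" by (simp add: int_pow_mult)
lemma P_Suc: "P (int (Suc n)) = D \<otimes> P (int n)"
proof -
  have "P (int (Suc n)) = P (1 + int n)" by (simp only: of_nat_Suc)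
  also have "\<dots> = P 1 \<otimes> P (int n)" by (rule P_add)
  finally show ?thesis by simp
qed
lemma P_Suc': "P (int (Suc n)) = P (int n) \<otimes> D"
proof -
  have "P (int (Suc n)) = P (int n + 1)" by (simp only: of_nat_Suc add.commute)
  also have "\<dots> = P (int n) \<otimes> P 1" by (rule P_add)
  finally show ?thesis by simp
qed
lemma P_neg: "P (- j) = inv (P j)" by (simp add: int_pow_neg)
lemma c1[simp]: "z \<in> carrier G \<Longrightarrow> P (-j) \<otimes> (P j \<otimes> z) = z"
  by (simp add: P_neg m_assoc[symmetric])
lemma c2[simp]: "z \<in> carrier G \<Longrightarrow> P j \<otimes> (P (-j) \<otimes> z) = z"
  by (simp add: P_neg m_assoc[symmetric])
lemma c3[simp]: "P (-j) \<otimes> P j = \<one>" by (simp add: P_neg)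
lemma c4[simp]: "P j \<otimes> P (-j) = \<one>" by (simp add: P_neg)

lemma Ph_def: "Ph j x = P j \<otimes> x \<otimes> P (-j)" by (simp add: Phi_def)
lemma Ph_c[simp]: "x \<in> carrier G \<Longrightarrow> Ph j x \<in> carrier G" by (simp add: Ph_def)
lemma Ph_mult: "x \<in> carrier G \<Longrightarrow> y \<in> carrier G \<Longrightarrow> Ph j (x \<otimes> y) = Ph j x \<otimes> Ph j y"
  by (simp add: Ph_def m_assoc)
lemma Ph_one[simp]: "Ph j \<one> = \<one>" by (simp add: Ph_def)
lemma Ph_inv: "x \<in> carrier G \<Longrightarrow> Ph j (inv x) = inv (Ph j x)"
  by (simp add: Ph_def inv_mult_group m_assoc P_neg)
lemma Ph_comp: "x \<in> carrier G \<Longrightarrow> Ph i (Ph j x) = Ph (i + j) x"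
proof -
  assume x: "x \<in> carrier G"
  have "P (- (i + j)) = P (-j) \<otimes> P (-i)" using P_add[of "-j" "-i"] by (simp add: add.commute)
  then show ?thesis using x by (simp add: Ph_def P_add m_assoc)
qed
lemma Ph_0[simp]: "x \<in> carrier G \<Longrightarrow> Ph 0 x = x" by (simp add: Ph_def)
lemma Ph_inverse[simp]: "x \<in> carrier G \<Longrightarrow> Ph (-j) (Ph j x) = x" by (simp add: Ph_comp)
lemma Ph_inverse2[simp]: "x \<in> carrier G \<Longrightarrow> Ph j (Ph (-j) x) = x" by (simp add: Ph_comp)
lemma Ph_P[simp]: "Ph j (P i) = P i"
proof -
  have "P j \<otimes> P i \<otimes> P (-j) = P (j + i + - j)" by (simp only: P_add)
  also have "\<dots> = P i" by simp
  finally show ?thesis by (simp add: Ph_def)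
qed
lemma P1: "P 1 = D" by simp
lemma Pm1: "P (-1) = inv D" by (simp add: P_neg)

lemma lprod_Nil[simp]: "lprod G [] = \<one>" by (simp add: lprod_def)
lemma lprod_Cons[simp]: "lprod G (x # xs) = x \<otimes> lprod G xs" by (simp add: lprod_def)
lemma lprod_c: "set xs \<subseteq> carrier G \<Longrightarrow> lprod G xs \<in> carrier G" by (induction xs) auto
lemma lprod_append: "set xs \<subseteq> carrier G \<Longrightarrow> set ys \<subseteq> carrier G \<Longrightarrow>
  lprod G (xs @ ys) = lprod G xs \<otimes> lprod G ys"
  by (induction xs) (auto simp: lprod_c m_assoc)
lemma lprod_M: "set xs \<subseteq> M \<Longrightarrow> lprod G xs \<in> M" by (induction xs) (auto simp: M_one M_mult)
lemma Ph_lprod: "set xs \<subseteq> carrier G \<Longrightarrow> Ph j (lprod G xs) = lprod G (map (Ph j) xs)"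
  by (induction xs) (auto simp: Ph_mult lprod_c)

lemma Div_eq: "Div G M D = {b \<in> M. b \<preceq> D}" by (simp add: Div_def DivL_def)
lemma DivR_eq: "DivR G M D = {b \<in> M. D \<otimes> inv b \<in> M}" by (simp add: DivR_def leR_def)
lemma Div_R: "s \<in> Div G M D \<Longrightarrow> D \<otimes> inv s \<in> M"
  using DivLR by (simp add: Div_def DivR_eq)
lemma R_Div: "s \<in> M \<Longrightarrow> D \<otimes> inv s \<in> M \<Longrightarrow> s \<in> Div G M D"
  using DivLR by (simp add: Div_def DivR_eq)

lemma Div_Ph1: assumes s: "s \<in> Div G M D" shows "Ph 1 s \<in> Div G M D"
proof -
  have sM: "s \<in> M" using s Div_eq by auto
  have sc: "s \<in> carrier G" using sM M_c by auto
  define t where "t = D \<otimes> inv s"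
  have tM: "t \<in> M" using Div_R s t_def by simp
  have tc: "t \<in> carrier G" using tM M_c by auto
  have "inv t \<otimes> D = s" using sc by (simp add: t_def inv_mult_group m_assoc)
  then have "t \<in> Div G M D" using tM sM by (simp add: Div_eq le_def')
  then have A: "D \<otimes> inv t \<in> M" by (rule Div_R)
  have e1: "D \<otimes> inv t = Ph 1 s" using sc by (simp add: t_def inv_mult_group m_assoc Ph_def Pm1)
  have "inv (Ph 1 s) \<otimes> D = t" using sc
    by (simp add: Ph_def Pm1 t_def inv_mult_group m_assoc)
  then show ?thesis using A e1 tM by (simp add: Div_eq le_def')
qed

lemma Div_Phm1: assumes s: "s \<in> Div G M D" shows "Ph (-1) s \<in> Div G M D"
proof -
  have sM: "s \<in> M" using s Div_eq by auto
  have sc: "s \<in> carrier G" using sM M_c by auto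
  define u where "u = inv s \<otimes> D"
  have uM: "u \<in> M" using s u_def by (simp add: Div_eq le_def')
  have uc: "u \<in> carrier G" using uM M_c by auto
  have "D \<otimes> inv u = s" using sc by (simp add: u_def inv_mult_group m_assoc)
  then have "u \<in> Div G M D" using uM sM R_Div by simp
  then have A: "inv u \<otimes> D \<in> M" by (simp add: Div_eq le_def')
  have e1: "inv u \<otimes> D = Ph (-1) s" using sc by (simp add: u_def inv_mult_group m_assoc Ph_def Pm1)
  have "D \<otimes> inv (Ph (-1) s) = u" using sc
    by (simp add: Ph_def Pm1 u_def inv_mult_group m_assoc)
  then show ?thesis using A e1 uM R_Div by simp
qed

lemma Div_M: "s \<in> Div G M D \<Longrightarrow> s \<in> M" using Div_eq by auto

lemma M_Ph_pm1: assumes "x \<in> M" "j = 1 \<or> j = -1" shows "Ph j x \<in> M"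
proof -
  obtain xs where xs: "set xs \<subseteq> Div G M D" "x = lprod G xs" using assms gen
    by (auto simp: monoid_gen_def)
  have c: "set xs \<subseteq> carrier G" using xs Div_M M_c by blast
  have "set (map (Ph j) xs) \<subseteq> M" using xs assms Div_Ph1 Div_Phm1 Div_M by auto
  then show ?thesis using xs c Ph_lprod lprod_M by simp
qed

lemma Ph_M: "x \<in> M \<Longrightarrow> Ph j x \<in> M"
proof (induction j arbitrary: x rule: int_induct[where k=0])
  case base then show ?case using M_c by simp
next
  case (step1 i)
  have "Ph (i + 1) x = Ph 1 (Ph i x)" using step1 M_c by (simp add: Ph_comp add.commute)
  then show ?case using step1 M_Ph_pm1 by simp
next
  case (step2 i)
  have "Ph (i - 1) x = Ph (-1) (Ph i x)" using step2 M_c by (simp add: Ph_comp)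
  then show ?case using step2 M_Ph_pm1 by simp
qed

lemma Ph_M_iff: "x \<in> carrier G \<Longrightarrow> Ph j x \<in> M \<longleftrightarrow> x \<in> M"
  by (metis Ph_M Ph_inverse)

lemma Ph_le: "x \<in> carrier G \<Longrightarrow> y \<in> carrier G \<Longrightarrow> Ph j x \<preceq> Ph j y \<longleftrightarrow> x \<preceq> y"
  by (simp add: le_def' Ph_inv[symmetric] Ph_mult[symmetric] Ph_M_iff)

lemma Ph_D[simp]: "Ph j D = D" using Ph_P[of j 1] by simp

lemma Ph_Div: assumes s: "s \<in> Div G M D" shows "Ph j s \<in> Div G M D"
proof -
  have sM: "s \<in> M" using s by (rule Div_M)
  have sc: "s \<in> carrier G" using sM by (rule M_c)
  have "s \<preceq> D" using s by (simp add: Div_eq)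
  then have 1: "Ph j s \<preceq> D" using Ph_le[OF sc D_c, of j] by simp
  have 2: "Ph j s \<in> M" using sM by (rule Ph_M)
  show ?thesis using 1 2 by (simp add: Div_eq)
qed

lemma RM: assumes "z \<in> carrier G" "a \<in> carrier G"
  shows "z \<preceq> a \<otimes> P m \<longleftrightarrow> z \<otimes> P (-m) \<preceq> a"
proof -
  have "inv (z \<otimes> P (-m)) \<otimes> a = Ph m (inv z \<otimes> (a \<otimes> P m))" using assms
    by (simp add: Ph_def inv_mult_group m_assoc P_neg)
  then show ?thesis using assms by (simp add: le_def' Ph_M_iff)
qed


lemma P_M: "P (int n) \<in> M"
proof (induction n)
  case 0 then show ?case by (simp add: M_one)
next
  case (Suc n)
  have "P (int (Suc n)) = P (int n + 1)" by (simp only: of_nat_Suc add.commute)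
  also have "\<dots> = P (int n) \<otimes> P 1" by (rule P_add)
  finally have "P (int (Suc n)) = P (int n) \<otimes> P 1" .
  then show ?case using Suc M_mult D_M by simp
qed

lemma letter_le: "x \<in> Div G M D \<union> (\<lambda>x. inv x) ` Div G M D \<Longrightarrow> x \<preceq> D"
proof -
  assume x: "x \<in> Div G M D \<union> (\<lambda>x. inv x) ` Div G M D"
  show ?thesis
  proof (cases "x \<in> Div G M D")
    case True then show ?thesis by (simp add: Div_eq)
  next
    case False
    then obtain s where s: "s \<in> Div G M D" "x = inv s" using x by auto
    then show ?thesis using Div_M M_c M_mult D_M by (simp add: le_def')
  qed
qed

lemma lower: "set xs \<subseteq> Div G M D \<union> (\<lambda>x. inv x) ` Div G M D \<Longrightarrow> lprod G xs \<preceq> P (int (length xs))"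
proof (induction xs)
  case Nil then show ?case by (simp add: le_refl)
next
  case (Cons x xs)
  have carr: "set (x # xs) \<subseteq> carrier G" using Cons.prems Div_M M_c by auto
  have xc: "x \<in> carrier G" using carr by auto
  have gc: "lprod G xs \<in> carrier G" using carr lprod_c by auto
  have 1: "x \<otimes> lprod G xs \<preceq> x \<otimes> P (int (length xs))" using Cons xc gc le_lmult by simp
  have "x \<preceq> D" using Cons.prems letter_le by simp
  then have 2: "x \<otimes> P (int (length xs)) \<preceq> D \<otimes> P (int (length xs))" using RM xc
    by (simp add: m_assoc)
  have e: "P (int (length (x # xs))) = D \<otimes> P (int (length xs))" using P_Suc by simp
  show ?case using le_trans[OF _ _ _ 1 2] xc gc e by simp
qed

lemma Cstar: assumes "y \<in> carrier G" "t \<in> carrier G" "y \<preceq> t \<otimes> P (int m)"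
  and "\<And>w. w \<in> carrier G \<Longrightarrow> w \<preceq> t \<Longrightarrow> w \<preceq> y \<Longrightarrow> w \<preceq> \<one>"
  shows "y \<preceq> P (int m)"
proof -
  have 1: "y \<otimes> P (- int m) \<preceq> t" using RM assms by simp
  have "y \<preceq> y \<otimes> P (int m)" using le_lmult[of \<one> "P (int m)" y] assms P_M one_le by simp
  then have 2: "y \<otimes> P (- int m) \<preceq> y" using RM assms by simp
  have "y \<otimes> P (- int m) \<preceq> \<one>" using assms(4)[OF _ 1 2] assms by simp
  then show ?thesis using RM[of y \<one> "int m"] assms by simp
qed

lemma upper_len: "x \<in> M \<Longrightarrow> x \<preceq> P (int m) \<Longrightarrow>
   \<exists>xs. length xs \<le> m \<and> set xs \<subseteq> Div G M D - {\<one>} \<and> lprod G xs = x"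
proof (induction m arbitrary: x)
  case 0
  then have "x = \<one>" using le_one_M by simp
  then show ?case by (intro exI[of _ "[]"]) simp
next
  case (Suc m)
  have xc: "x \<in> carrier G" using Suc M_c by auto
  obtain h where h: "h \<in> carrier G" "h \<preceq> x" "h \<preceq> D" "\<And>z. z \<in> carrier G \<Longrightarrow> z \<preceq> x \<Longrightarrow> z \<preceq> D \<Longrightarrow> z \<preceq> h"
    by (rule meet_ex[OF xc D_c]) blast
  have "\<one> \<preceq> h" using h(4)[of \<one>] Suc.prems D_M one_le xc by simp
  then have hM: "h \<in> M" using one_le h by simp
  have hD: "h \<in> Div G M D" using hM h Div_eq by simp
  define x' where "x' = inv h \<otimes> x"
  have x'M: "x' \<in> M" using h(2) x'_def by (simp add: le_def')
  have x'c: "x' \<in> carrier G" using x'M M_c by auto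
  have xe: "x = h \<otimes> x'" using x'_def h xc by simp
  define t where "t = inv h \<otimes> D"
  have tc: "t \<in> carrier G" using t_def h by simp
  have "P (int (Suc m)) = h \<otimes> (t \<otimes> P (int m))" unfolding P_Suc using h
    by (simp add: t_def m_assoc[symmetric])
  then have "h \<otimes> x' \<preceq> h \<otimes> (t \<otimes> P (int m))" using Suc.prems xe by simp
  then have 1: "x' \<preceq> t \<otimes> P (int m)" using le_lmult h x'c tc by simp
  have 2: "w \<preceq> \<one>" if w: "w \<in> carrier G" "w \<preceq> t" "w \<preceq> x'" for w
  proof -
    have "h \<otimes> w \<preceq> h \<otimes> t" using w le_lmult h tc by simp
    then have a: "h \<otimes> w \<preceq> D" using h t_def by simp
    have "h \<otimes> w \<preceq> x" using w le_lmult h x'c xe by simp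
    then have "h \<otimes> w \<preceq> h \<otimes> \<one>" using a h w by simp
    then show ?thesis using le_lmult[of w \<one> h] h w by simp
  qed
  have "x' \<preceq> P (int m)" using Cstar[OF x'c tc 1 2] by blast
  then obtain xs where xs: "length xs \<le> m" "set xs \<subseteq> Div G M D - {\<one>}" "lprod G xs = x'"
    using Suc.IH x'M by blast
  show ?case
  proof (cases "h = \<one>")
    case True then show ?thesis using xs xe x'c by (intro exI[of _ xs]) simp
  next
    case False then show ?thesis using xs xe hD by (intro exI[of _ "h # xs"]) simp
  qed
qed


abbreviation N where "N \<equiv> parN G M d"

lemma d_bal: "balanced G M d" using par by (simp add: parabolic_def)
lemma d_M: "d \<in> M" using d_bal by (simp add: balanced_def)
lemma d_c[simp]: "d \<in> carrier G" using d_M M_c by auto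
lemma par_eq: "Div G M d = Div G M D \<inter> N" using par by (simp add: parabolic_def parN_def)
lemma Divd_eq: "Div G M d = {b \<in> M. b \<preceq> d}" by (simp add: Div_def DivL_def)
lemma d_Divd: "d \<in> Div G M d" using d_M le_refl by (simp add: Divd_eq)
lemma d_DivD: "d \<in> Div G M D" using d_Divd par_eq by auto
lemma d_le_D: "d \<preceq> D" using d_DivD Div_eq by auto
lemma Divd_N: "x \<in> M \<Longrightarrow> x \<preceq> d \<Longrightarrow> x \<in> N"
  unfolding parN_def monoid_gen_def by (rule CollectI, rule exI[of _ "[x]"]) (simp add: Divd_eq M_c)
lemma d_N: "d \<in> N" using Divd_N d_M le_refl by simp
lemma N_mult: assumes "x \<in> N" "y \<in> N" shows "x \<otimes> y \<in> N"
proof -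
  obtain xs ys where "set xs \<subseteq> Div G M d" "x = lprod G xs" "set ys \<subseteq> Div G M d" "y = lprod G ys"
    using assms by (auto simp: parN_def monoid_gen_def)
  moreover have "Div G M d \<subseteq> carrier G" using Divd_eq M_c by auto
  ultimately show ?thesis unfolding parN_def monoid_gen_def
    by (intro CollectI exI[of _ "xs @ ys"]) (auto simp: lprod_append)
qed
lemma N_Divd: "x \<in> N \<Longrightarrow> x \<in> M \<Longrightarrow> x \<preceq> D \<Longrightarrow> x \<preceq> d"
  using par_eq Div_eq Divd_eq by auto

abbreviation om where "om \<equiv> inv d \<otimes> D"
lemma om_c[simp]: "om \<in> carrier G" by simp
lemma om_M: "om \<in> M" using d_le_D by (simp add: le_def')
lemma om_Div: "om \<in> Div G M D"
  using om_M R_Div by (simp add: inv_mult_group m_assoc[symmetric] d_M)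

lemma dd_cop: assumes "v \<in> M" "v \<preceq> d" "v \<preceq> om" shows "v = \<one>"
proof -
  have vc: "v \<in> carrier G" using assms M_c by auto
  have "d \<otimes> v \<in> N" using N_mult d_N Divd_N assms by simp
  moreover have "d \<otimes> v \<in> M" using M_mult d_M assms by simp
  moreover have "d \<otimes> v \<preceq> d \<otimes> om" using le_lmult[of v om d] assms vc by simp
  ultimately have "d \<otimes> v \<preceq> d \<otimes> \<one>" using N_Divd by simp
  then show ?thesis using le_lmult[of v \<one> d] vc le_one_M assms by simp
qed

lemma head_ex: "set xs \<subseteq> Div G M D \<Longrightarrow> lprod G xs \<noteq> \<one> \<Longrightarrow>
   \<exists>s \<in> Div G M D. s \<noteq> \<one> \<and> s \<preceq> lprod G xs"
proof (induction xs)
  case Nil then show ?case by simp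
next
  case (Cons x xs)
  have xM: "x \<in> M" using Cons Div_M by auto
  have rM: "lprod G xs \<in> M" using Cons Div_M lprod_M by auto
  have xc: "x \<in> carrier G" and rc: "lprod G xs \<in> carrier G" using xM rM M_c by auto
  show ?case
  proof (cases "x = \<one>")
    case True
    then obtain s where "s \<in> Div G M D" "s \<noteq> \<one>" "s \<preceq> lprod G xs" using Cons rc by auto
    then show ?thesis using True rc by auto
  next
    case False
    have "x \<otimes> \<one> \<preceq> x \<otimes> lprod G xs" using le_lmult[of \<one> "lprod G xs" x] xc rc one_le rM by simp
    then show ?thesis using False Cons xc by auto
  qed
qed

lemma head_ex': assumes "g \<in> M" "g \<noteq> \<one>" shows "\<exists>s \<in> Div G M D. s \<noteq> \<one> \<and> s \<preceq> g"
proof -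
  obtain xs where "set xs \<subseteq> Div G M D" "g = lprod G xs" using assms gen by (auto simp: monoid_gen_def)
  then show ?thesis using head_ex assms by simp
qed

lemma Zc: assumes g: "g \<in> M" "g \<preceq> d \<otimes> d" and cop: "\<And>w. w \<in> M \<Longrightarrow> w \<preceq> g \<Longrightarrow> w \<preceq> d \<Longrightarrow> w = \<one>"
  shows "g = \<one>"
proof (rule ccontr)
  assume "g \<noteq> \<one>"
  then obtain s where s: "s \<in> Div G M D" "s \<noteq> \<one>" "s \<preceq> g" using head_ex' g by blast
  have sM: "s \<in> M" using s Div_M by auto
  have sc: "s \<in> carrier G" using sM M_c by auto
  have gc: "g \<in> carrier G" using g M_c by auto
  have "s \<preceq> d \<otimes> d" using le_trans[OF sc gc _ s(3) g(2)] by simp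
  then have 1: "inv d \<otimes> s \<preceq> d" using le_lmult[of "inv d \<otimes> s" d d] sc by (simp add: m_assoc[symmetric])
  have "s \<preceq> d \<otimes> om" using s Div_eq by simp
  then have 2: "inv d \<otimes> s \<preceq> om" using le_lmult[of "inv d \<otimes> s" om d] sc by (simp add: m_assoc[symmetric])
  have 3: "inv d \<otimes> s \<preceq> \<one>"
    by (rule coprime_pos[OF d_M om_M _ _ 1 2]) (use dd_cop sc in auto)
  have "d \<otimes> (inv d \<otimes> s) \<preceq> d \<otimes> \<one>" using le_lmult[of "inv d \<otimes> s" \<one> d] 3 sc by simp
  then have "s \<preceq> d" using sc by simp
  then show False using cop sM s by simp
qed


definition Pr where "Pr j = lprod G (map (\<lambda>i. Ph (- int i + 1) om) [1..<j+1])"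

lemma Pr_M: "Pr j \<in> M"
  unfolding Pr_def by (rule lprod_M) (auto intro: Ph_M om_M)
lemma Pr_c[simp]: "Pr j \<in> carrier G" using Pr_M M_c by auto
lemma Pr_0[simp]: "Pr 0 = \<one>" by (simp add: Pr_def)
lemma Pr_Suc: "Pr (Suc j) = om \<otimes> Ph (-1) (Pr j)"
proof -
  have "[1..<Suc j + 1] = 1 # map Suc [1..<j+1]"
    by (simp only: map_Suc_upt) (simp add: upt_conv_Cons)
  then have "Pr (Suc j) = om \<otimes> lprod G (map (\<lambda>i. Ph (- int (Suc i) + 1) om) [1..<j+1])"
    by (simp add: Pr_def o_def)
  also have "map (\<lambda>i. Ph (- int (Suc i) + 1) om) [1..<j+1] = map (Ph (-1)) (map (\<lambda>i. Ph (- int i + 1) om) [1..<j+1])"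
    unfolding map_map by (rule map_cong) (simp_all add: Ph_comp o_def del: upt_Suc)
  also have "lprod G (map (Ph (-1)) (map (\<lambda>i. Ph (- int i + 1) om) [1..<j+1])) = Ph (-1) (Pr j)"
    unfolding Pr_def by (rule Ph_lprod[symmetric]) (auto simp del: upt_Suc)
  finally show ?thesis .
qed

definition ee where "ee k c j = Pr j \<otimes> Ph (int k - int j) c"

lemma ee_M: "c \<in> M \<Longrightarrow> ee k c j \<in> M" by (simp add: ee_def M_mult Pr_M Ph_M)
lemma ee_Suc: assumes "c \<in> M" shows "ee k c (Suc j) = om \<otimes> Ph (-1) (ee k c j)"
proof -
  have cc: "c \<in> carrier G" using assms M_c by auto
  have "Ph (-1) (ee k c j) = Ph (-1) (Pr j) \<otimes> Ph (int k - int (Suc j)) c"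
  proof -
    have e: "int k - int j - 1 = int k - int (Suc j)" by simp
    show ?thesis using cc by (simp add: ee_def Ph_mult Ph_comp e del: of_nat_Suc)
  qed
  then show ?thesis using cc by (simp add: ee_def Pr_Suc m_assoc)
qed
lemma ee_Suc': assumes "c \<in> M" shows "ee k c (Suc j) = inv d \<otimes> (ee k c j \<otimes> D)"
  using ee_Suc[OF assms] ee_M[OF assms, of k j] M_c by (simp add: Ph_def m_assoc Pm1)

lemma Cop: assumes c: "c \<in> M" and red: "reduced G M D d (- int k) c"
  shows "j \<le> k \<Longrightarrow> w \<in> M \<Longrightarrow> w \<preceq> ee k c j \<Longrightarrow> w \<preceq> d \<Longrightarrow> w = \<one>"
proof (induction j arbitrary: w)
  case 0
  have cc: "c \<in> carrier G" using c M_c by auto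
  have wc: "w \<in> carrier G" using 0 M_c by auto
  have wN: "w \<in> N" using Divd_N 0 by simp
  have "w \<preceq> Ph (int k) c" using 0 cc by (simp add: ee_def)
  then have "Ph (- int k) w \<preceq> c" using Ph_le[of w "Ph (int k) c" "- int k"] wc cc by simp
  moreover have "\<forall>b\<in>N. Ph (- int k) b \<preceq> c \<longrightarrow> Ph (- int k) b = \<one>" using red by (simp add: reduced_def)
  ultimately have "Ph (- int k) w = \<one>" using wN by simp
  then have "Ph (int k) (Ph (- int k) w) = \<one>" by simp
  then show ?case using wc by simp
next
  case (Suc j)
  define y where "y = ee k c j"
  have yM: "y \<in> M" using ee_M c y_def by simp
  have yc: "y \<in> carrier G" using yM M_c by auto
  have bc: "w \<in> carrier G" using Suc M_c by auto
  define z where "z = d \<otimes> w"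
  have zc: "z \<in> carrier G" using bc z_def by simp
  have zM: "z \<in> M" using z_def M_mult d_M Suc by simp
  have "d \<otimes> w \<preceq> d \<otimes> (inv d \<otimes> (y \<otimes> D))" using Suc.prems(3) ee_Suc'[OF c] y_def le_lmult[of w "inv d \<otimes> (y \<otimes> D)" d] bc yc by simp
  then have "z \<preceq> y \<otimes> P 1" using yc by (simp add: z_def)
  then have 1: "z \<otimes> P (-1) \<preceq> y" using RM zc yc by blast
  have "z \<preceq> z \<otimes> P 1" using le_lmult[of \<one> "P 1" z] zc D_M one_le by simp
  then have 2: "z \<otimes> P (-1) \<preceq> z" using RM zc by blast
  obtain g where g: "g \<in> carrier G" "g \<preceq> y" "g \<preceq> z" "\<And>u. u \<in> carrier G \<Longrightarrow> u \<preceq> y \<Longrightarrow> u \<preceq> z \<Longrightarrow> u \<preceq> g"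
    by (rule meet_ex[OF yc zc]) blast
  have "\<one> \<preceq> g" using g(4)[of \<one>] yM zM one_le yc zc by simp
  then have gM: "g \<in> M" using one_le g by simp
  have "z \<preceq> d \<otimes> d" using Suc.prems(4) le_lmult bc z_def by simp
  then have gdd: "g \<preceq> d \<otimes> d" using le_trans[OF g(1) zc _ g(3)] by simp
  have "g = \<one>"
  proof (rule Zc[OF gM gdd])
    fix u assume u: "u \<in> M" "u \<preceq> g" "u \<preceq> d"
    have "u \<preceq> ee k c j" using le_trans[OF _ g(1) yc u(2) g(2)] u M_c y_def by simp
    then show "u = \<one>" using Suc.IH Suc.prems u by simp
  qed
  then have "z \<otimes> P (-1) \<preceq> \<one>" using g(4)[OF _ 1 2] zc by simp
  then have "z \<preceq> D" using RM[of z \<one> 1] zc by simp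
  moreover have "z \<in> N" using z_def N_mult d_N Divd_N Suc.prems by simp
  ultimately have "d \<otimes> w \<preceq> d \<otimes> \<one>" using N_Divd zM z_def by simp
  then show ?case using le_lmult[of w \<one> d] bc le_one_M Suc.prems by simp
qed


lemma DD: assumes c: "c \<in> M" and red: "reduced G M D d (- int k) c"
  and nle: "\<not> Ph (- int k) om \<preceq> c"
  shows "j \<le> k \<Longrightarrow> ee k c j \<preceq> P (int n) \<Longrightarrow> j \<le> n \<and> c \<preceq> P (int (n - j))"
proof (induction j arbitrary: n)
  case 0
  have cc: "c \<in> carrier G" using c M_c by auto
  have "Ph (int k) c \<preceq> P (int n)" using 0 cc by (simp add: ee_def)
  then have "Ph (- int k) (Ph (int k) c) \<preceq> Ph (- int k) (P (int n))"
    using Ph_le[of "Ph (int k) c" "P (int n)" "- int k", OF Ph_c[OF cc] P_c] by blast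
  then show ?case using cc by simp
next
  case (Suc j)
  define y where "y = ee k c j"
  have yM: "y \<in> M" using ee_M c y_def by simp
  have yc: "y \<in> carrier G" using yM M_c by auto
  show ?case
  proof (cases n)
    case 0
    have eM: "ee k c (Suc j) \<in> M" using ee_M c by simp
    then have e1: "ee k c (Suc j) = \<one>" using Suc.prems 0 le_one_M by simp
    have pM: "Ph (-1) y \<in> M" using Ph_M yM by simp
    have "om \<otimes> \<one> \<preceq> om \<otimes> Ph (-1) y" using le_lmult[of \<one> "Ph (-1) y" om] pM M_c one_le by simp
    then have "om \<preceq> \<one>" using e1 ee_Suc[OF c] y_def by simp
    then have "om = \<one>" using le_one_M om_M by simp
    then have "Ph (- int k) om \<preceq> c" using c one_le M_c by simp
    then show ?thesis using nle by simp
  next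
    case (Suc n')
    have "ee k c (Suc j) \<preceq> P (int (Suc n'))" using Suc.prems \<open>n = Suc n'\<close> by simp
    then have "ee k c (Suc j) \<preceq> P (int n') \<otimes> D" unfolding P_Suc' .
    then have "inv d \<otimes> (y \<otimes> D) \<preceq> P (int n') \<otimes> D" using ee_Suc'[OF c] y_def by simp
    then have "d \<otimes> (inv d \<otimes> (y \<otimes> D)) \<preceq> d \<otimes> (P (int n') \<otimes> D)" using le_lmult[of "inv d \<otimes> (y \<otimes> D)" "P (int n') \<otimes> D" d] yc by simp
    then have 3: "y \<otimes> P 1 \<preceq> (d \<otimes> P (int n')) \<otimes> P 1" using yc by (simp add: m_assoc)
    have jk: "j \<le> k" using Suc.prems by simp
    have c1: "y \<otimes> P 1 \<in> carrier G" using yc by simp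
    have c2: "d \<otimes> P (int n') \<in> carrier G" by simp
    have "y \<otimes> P 1 \<otimes> P (-1) \<preceq> d \<otimes> P (int n')" using RM[OF c1 c2, of 1] 3 by blast
    then have 1: "y \<preceq> d \<otimes> P (int n')" using yc by (simp add: m_assoc P_neg)
    have 2: "w \<preceq> \<one>" if "w \<in> carrier G" "w \<preceq> d" "w \<preceq> y" for w
      by (rule coprime_pos[OF d_M yM _ that]) (use Cop[OF c red jk] y_def in blast)
    have "y \<preceq> P (int n')" using Cstar[OF yc d_c 1 2] by blast
    then have ih: "j \<le> n' \<and> c \<preceq> P (int (n' - j))" using Suc.IH jk y_def by blast
    have e: "n - Suc j = n' - j" using \<open>n = Suc n'\<close> by simp
    have "Suc j \<le> n" using ih \<open>n = Suc n'\<close> by simp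
    moreover have "c \<preceq> P (int (n - Suc j))" unfolding e using ih by blast
    ultimately show ?thesis by blast
  qed
qed


abbreviation LL where "LL \<equiv> (Div G M D - {\<one>}) \<union> (\<lambda>x. inv x) ` (Div G M D - {\<one>})"

lemma lprod_filter: "set xs \<subseteq> carrier G \<Longrightarrow> lprod G (filter (\<lambda>x. x \<noteq> \<one>) xs) = lprod G xs"
  by (induction xs) (auto simp: lprod_c)

lemma W_ex: assumes "g \<in> M" shows "\<exists>n xs. length xs = n \<and> set xs \<subseteq> LL \<and> lprod G xs = g"
proof -
  obtain xs where xs: "set xs \<subseteq> Div G M D" "g = lprod G xs" using assms gen by (auto simp: monoid_gen_def)
  have "set xs \<subseteq> carrier G" using xs Div_M M_c by blast
  then have "lprod G (filter (\<lambda>x. x \<noteq> \<one>) xs) = g" using xs lprod_filter by simp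
  moreover have "set (filter (\<lambda>x. x \<noteq> \<one>) xs) \<subseteq> LL" using xs by auto
  ultimately show ?thesis by blast
qed

lemma wlen_ex: assumes "g \<in> M"
  shows "\<exists>xs. length xs = wlen G M D g \<and> set xs \<subseteq> LL \<and> lprod G xs = g"
proof -
  have "\<exists>n. \<exists>xs. length xs = n \<and> set xs \<subseteq> LL \<and> lprod G xs = g" using W_ex assms by blast
  then show ?thesis unfolding wlen_def by (rule LeastI_ex)
qed

lemma wlen_le: "set xs \<subseteq> LL \<Longrightarrow> lprod G xs = g \<Longrightarrow> wlen G M D g \<le> length xs"
  unfolding wlen_def by (rule Least_le) blast

lemma main: assumes c: "c \<in> M" and a: "a = Pr k \<otimes> c"
  and nle: "\<not> Ph (- int k) om \<preceq> c" and red: "reduced G M D d (- int k) c"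
  shows "wlen G M D a = wlen G M D c + k"
proof -
  have cc: "c \<in> carrier G" using c M_c by auto
  have aM: "a \<in> M" using a Pr_M c M_mult by simp
  obtain xc where xc: "length xc = wlen G M D c" "set xc \<subseteq> LL" "lprod G xc = c" using wlen_ex c by blast
  obtain xa where xa: "length xa = wlen G M D a" "set xa \<subseteq> LL" "lprod G xa = a" using wlen_ex aM by blast
  define ys where "ys = filter (\<lambda>x. x \<noteq> \<one>) (map (\<lambda>i. Ph (- int i + 1) om) [1..<k+1])"
  have ysD: "set (map (\<lambda>i. Ph (- int i + 1) om) [1..<k+1]) \<subseteq> Div G M D" using Ph_Div om_Div by auto
  then have ysc: "set (map (\<lambda>i. Ph (- int i + 1) om) [1..<k+1]) \<subseteq> carrier G" using Div_M M_c by blast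
  have ysL: "set ys \<subseteq> LL" using ysD ys_def by auto
  have "length ys \<le> length (map (\<lambda>i. Ph (- int i + 1) om) [1..<k+1])" unfolding ys_def by (rule length_filter_le)
  also have "\<dots> = k" by (simp del: upt_Suc)
  finally have lys: "length ys \<le> k" .
  have pys: "lprod G ys = Pr k" unfolding ys_def Pr_def by (rule lprod_filter[OF ysc])
  have DDc: "Div G M D \<subseteq> carrier G" using Div_M M_c by blast
  then have LLc: "LL \<subseteq> carrier G" by auto
  have ysc': "set ys \<subseteq> carrier G" using ysL LLc by (rule order_trans)
  have xcc: "set xc \<subseteq> carrier G" using xc(2) LLc by (rule order_trans)
  have "lprod G (ys @ xc) = lprod G ys \<otimes> lprod G xc" by (rule lprod_append[OF ysc' xcc])
  then have "lprod G (ys @ xc) = a" using pys xc(3) a by simp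
  moreover have "set (ys @ xc) \<subseteq> LL" using ysL xc(2) by simp
  ultimately have "wlen G M D a \<le> length (ys @ xc)" using wlen_le by blast
  then have up: "wlen G M D a \<le> wlen G M D c + k" using lys xc by simp
  have "LL \<subseteq> Div G M D \<union> (\<lambda>x. inv x) ` Div G M D" by auto
  then have "a \<preceq> P (int (wlen G M D a))" using lower[of xa] xa by auto
  moreover have "ee k c k = a" using a cc by (simp add: ee_def)
  ultimately have "ee k c k \<preceq> P (int (wlen G M D a))" by simp
  then have "k \<le> wlen G M D a \<and> c \<preceq> P (int (wlen G M D a - k))"
    by (rule DD[OF c red nle order_refl])
  then obtain zs where zs: "length zs \<le> wlen G M D a - k" "set zs \<subseteq> Div G M D - {\<one>}" "lprod G zs = c"
    using upper_len c by blast
  have "wlen G M D c \<le> length zs" using wlen_le zs by auto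
  then show ?thesis using up zs \<open>k \<le> wlen G M D a \<and> _\<close> by linarith
qed

end

theorem lemma5p7:
  fixes G :: "('a,'b) monoid_scheme" and M :: "'a set" and \<Delta> \<delta> a c :: 'a and k :: nat
  assumes "garside G M \<Delta>"
    and "parabolic G M \<Delta> \<delta>"
    and "a \<in> M" and "c \<in> M"
    and "a = lprod G (map (\<lambda>i. Phi G \<Delta> (- int i + 1) (inv\<^bsub>G\<^esub> \<delta> \<otimes>\<^bsub>G\<^esub> \<Delta>)) [1..<k+1])
               \<otimes>\<^bsub>G\<^esub> c"
    and "\<not> leL G M (Phi G \<Delta> (- int k) (inv\<^bsub>G\<^esub> \<delta> \<otimes>\<^bsub>G\<^esub> \<Delta>)) c"
    and "reduced G M \<Delta> \<delta> (- int k) c"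
  shows "wlen G M \<Delta> a = wlen G M \<Delta> c + k"
proof -
  have grp: "group G" using assms(1) by (simp add: garside_def pointed_submonoid_def)
  interpret GS G M \<Delta> \<delta> using grp assms(1,2) by (simp add: GS_def GS_axioms_def)
  show ?thesis
    by (rule main[OF assms(4) _ assms(6) assms(7)]) (simp add: assms(5) Pr_def)
qed

end
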